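(* Let $f_1,\dots,f_N$, $\Phi$ and the iterates $x_k$, directions $d_k$ be as defined in the context (Algorithm X). If $d_k\ne 0$, then $\Phi'(x_k;d_k)<0$.
   Context: Standing assumptions: $f_1,\dots,f_N:\mathbb{R}^n\to\mathbb{R}$; (H1) there is $M\in\mathbb{R}$ with $f_j(x)\ge M$ for all $x$ and $j$; (H2) each $f_j\in C^1(\mathbb{R}^n)$ and there is a modulus of continuity $w$ (increasing $w:[0,\infty)\to[0,\infty)$, $w(0)=0$, continuous at $0$) with $\|\nabla f_j(x)-\nabla f_j(y)\|\le w(\|x-y\|)$ for all $x,y$ and $j$. Let $\Phi(x)=\max_{1\le j\le N}f_j(x)$, and $g'(x;d)=\lim_{t\to0^+}\frac{g(x+td)-g(x)}{t}$ denotes the directional derivative. Algorithm X: set $x_0=0$, $c=\sigma=\tfrac12$. At iteration $k$: let $G\in\mathbb{R}^{N\times n}$ have $j$-th row $\nabla f_j(x_k)^T$, $f=(f_1(x_k),\dots,f_N(x_k))^T$; let $\lambda$ be a solution of $\min_\lambda(\tfrac12\lambda^TGG^T\lambda-f^T\lambda)$ subject to $\sum_i\lambda_i=1$, $\lambda_i\ge0$; set $p_k=-G^T\lambda$, and $d_k=0$ if $p_k=0$, otherwise $d_k=p_k/\|p_k\|$. If $d_k=0$ set $\alpha_k=1$; otherwise $\alpha_k=\sigma^j$ where $j$ is the smallest nonnegative integer with $\Phi(x_k+\sigma^jd_k)<\Phi(x_k)+c\sigma^j\Phi'(x_k;d_k)$. Set $x_{k+1}=x_k+\alpha_kd_k$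 and repeat. *)

theory Defs
  imports "HOL-Analysis.Analysis"
begin

text \<open>Phi(x) = max_j f_j(x); the index type 'm is finite (N = CARD('m) \<ge> 1).\<close>
definition Phi :: "('m::finite \<Rightarrow> 'a \<Rightarrow> real) \<Rightarrow> 'a \<Rightarrow> real" where
  "Phi f x = Max (range (\<lambda>j. f j x))"

definition dir_deriv :: "('a::real_normed_vector \<Rightarrow> real) \<Rightarrow> 'a \<Rightarrow> 'a \<Rightarrow> real" where
  "dir_deriv g x d = Lim (at_right 0) (\<lambda>t. (g (x + t *\<^sub>R d) - g x) / t)"

definition unit_simplex :: "('m::finite \<Rightarrow> real) set" where
  "unit_simplex = {lam. (\<forall>i. lam i \<ge> 0) \<and> sum lam UNIV = 1}"

text \<open>QP objective (1/2) lam^T G G^T lam - f^T lam at the point x,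
  where G has j-th row grad f_j(x)^T, so lam^T G G^T lam = norm (G^T lam)^2.\<close>
definition qp_obj :: "('m::finite \<Rightarrow> real ^ 'n \<Rightarrow> real) \<Rightarrow> ('m \<Rightarrow> real ^ 'n \<Rightarrow> real ^ 'n)
    \<Rightarrow> real ^ 'n \<Rightarrow> ('m \<Rightarrow> real) \<Rightarrow> real" where
  "qp_obj f gradf x lam =
     (1/2) * (norm (\<Sum>j\<in>UNIV. lam j *\<^sub>R gradf j x))\<^sup>2 - (\<Sum>j\<in>UNIV. lam j * f j x)"

text \<open>Armijo condition for trial exponent i, with c = sigma = 1/2.\<close>
definition armijo :: "('m::finite \<Rightarrow> real ^ 'n \<Rightarrow> real) \<Rightarrow> real ^ 'n \<Rightarrow> real ^ 'n \<Rightarrow> nat \<Rightarrow> bool" where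
  "armijo f xk dk i \<longleftrightarrow>
     Phi f (xk + ((1/2::real) ^ i) *\<^sub>R dk)
       < Phi f xk + (1/2) * ((1/2::real) ^ i) * dir_deriv (Phi f) xk dk"

text \<open>The sequences x, lam, p, d, alpha are generated by Algorithm X
  (lam k is any solution of the QP at x k).\<close>
definition algX :: "('m::finite \<Rightarrow> real ^ 'n \<Rightarrow> real) \<Rightarrow> ('m \<Rightarrow> real ^ 'n \<Rightarrow> real ^ 'n)
    \<Rightarrow> (nat \<Rightarrow> real ^ 'n) \<Rightarrow> (nat \<Rightarrow> 'm \<Rightarrow> real) \<Rightarrow> (nat \<Rightarrow> real ^ 'n)
    \<Rightarrow> (nat \<Rightarrow> real ^ 'n) \<Rightarrow> (nat \<Rightarrow> real) \<Rightarrow> bool" where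
  "algX f gradf x lam p d alpha \<longleftrightarrow>
     x 0 = 0 \<and>
     (\<forall>k.
        lam k \<in> unit_simplex \<and>
        (\<forall>mu\<in>unit_simplex. qp_obj f gradf (x k) (lam k) \<le> qp_obj f gradf (x k) mu) \<and>
        p k = - (\<Sum>j\<in>UNIV. lam k j *\<^sub>R gradf j (x k)) \<and>
        d k = (if p k = 0 then 0 else (1 / norm (p k)) *\<^sub>R p k) \<and>
        (d k = 0 \<longrightarrow> alpha k = 1) \<and>
        (d k \<noteq> 0 \<longrightarrow> (\<exists>i. alpha k = (1/2) ^ i \<and> armijo f (x k) (d k) i
                                \<and> (\<forall>i'<i. \<not> armijo f (x k) (d k) i'))) \<and>
        x (Suc k) = x k + alpha k *\<^sub>R d k)"

end

theory Submission
  imports Defs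
begin

lemma small_pos:
  fixes a c :: real
  assumes c: "c \<ge> 0" and h: "\<And>t. 0 < t \<Longrightarrow> t \<le> 1 \<Longrightarrow> a + t * c / 2 \<ge> 0"
  shows "a \<ge> 0"
proof (rule ccontr)
  assume a: "\<not> a \<ge> 0"
  define t where "t = min 1 (-a/(c+1))"
  have t0: "0 < t" "t \<le> 1" using a c by (auto simp: t_def divide_neg_pos)
  have "t \<le> -a/(c+1)" by (simp add: t_def)
  hence "t * c \<le> (-a/(c+1)) * c" using c by (rule mult_right_mono)
  also have "\<dots> < -a * 2" using a c mult_nonpos_nonneg[of a c] by (simp add: field_simps)
  finally have "a + t * c / 2 < 0" by simp
  with h[OF t0] show False by simp
qed

lemma qp_ineq:
  fixes f :: "'m::finite \<Rightarrow> real ^ 'n \<Rightarrow> real"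
    and gradf :: "'m \<Rightarrow> real ^ 'n \<Rightarrow> real ^ 'n"
  assumes lm: "lm \<in> unit_simplex"
    and opt: "\<forall>mu\<in>unit_simplex. qp_obj f gradf X lm \<le> qp_obj f gradf X mu"
  shows "(\<Sum>j\<in>UNIV. lm j *\<^sub>R gradf j X) \<bullet> gradf i X - (norm (\<Sum>j\<in>UNIV. lm j *\<^sub>R gradf j X))\<^sup>2
          + (\<Sum>j\<in>UNIV. lm j * f j X) - f i X \<ge> 0"
proof -
  define S where "S = (\<Sum>j\<in>UNIV. lm j *\<^sub>R gradf j X)"
  define F where "F = (\<Sum>j\<in>UNIV. lm j * f j X)"
  define g where "g = gradf i X"
  have "S \<bullet> g - (norm S)\<^sup>2 + F - f i X + t * (norm (g - S))\<^sup>2 / 2 \<ge> 0" if t: "0 < t" "t \<le> 1" for t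
  proof -
    define mu where "mu = (\<lambda>j. (1-t) * lm j + t * (if j = i then 1 else 0))"
    have s1: "sum lm UNIV = 1" "\<And>j. lm j \<ge> 0" using lm by (auto simp: unit_simplex_def)
    have "mu \<in> unit_simplex"
      using s1 t by (auto simp: unit_simplex_def mu_def sum.distrib sum_distrib_left[symmetric])
    hence le: "qp_obj f gradf X lm \<le> qp_obj f gradf X mu" using opt by blast
    have e1: "(\<Sum>j\<in>UNIV. mu j *\<^sub>R gradf j X) = S + t *\<^sub>R (g - S)"
    proof -
      have "(\<Sum>j\<in>UNIV. mu j *\<^sub>R gradf j X) = (\<Sum>j\<in>UNIV. (1-t) *\<^sub>R (lm j *\<^sub>R gradf j X) + (if j = i then t *\<^sub>R gradf j X else 0))"
        by (rule sum.cong) (auto simp: mu_def scaleR_add_left)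
      also have "\<dots> = (1-t) *\<^sub>R S + t *\<^sub>R g"
        by (simp add: sum.distrib scaleR_sum_right S_def g_def)
      finally show ?thesis by (simp add: algebra_simps)
    qed
    have e2: "(\<Sum>j\<in>UNIV. mu j * f j X) = F + t * (f i X - F)"
    proof -
      have "(\<Sum>j\<in>UNIV. mu j * f j X) = (\<Sum>j\<in>UNIV. (1-t) * (lm j * f j X) + (if j = i then t * f j X else 0))"
        by (rule sum.cong) (auto simp: mu_def algebra_simps)
      also have "\<dots> = (1-t) * F + t * f i X"
        by (simp add: sum.distrib sum_distrib_left[symmetric] F_def)
      finally show ?thesis by (simp add: algebra_simps)
    qed
    have n: "(norm (S + t *\<^sub>R (g - S)))\<^sup>2 = (norm S)\<^sup>2 + 2 * t * (S \<bullet> (g - S)) + t\<^sup>2 * (norm (g - S))\<^sup>2"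
      unfolding power2_norm_eq_inner by (simp add: inner_add_left inner_add_right inner_diff_left inner_diff_right power2_eq_square algebra_simps inner_commute)
    from le have "(1/2) * (norm S)\<^sup>2 - F \<le> (1/2) * (norm (S + t *\<^sub>R (g - S)))\<^sup>2 - (F + t * (f i X - F))"
      unfolding qp_obj_def e1 e2 S_def F_def .
    hence "0 \<le> t * (S \<bullet> (g - S)) + t\<^sup>2 * (norm (g - S))\<^sup>2 / 2 - t * (f i X - F)"
      unfolding n by (simp add: algebra_simps)
    hence "0 \<le> t * (S \<bullet> (g - S) + t * (norm (g - S))\<^sup>2 / 2 - (f i X - F))"
      by (simp add: algebra_simps power2_eq_square)
    hence "0 \<le> S \<bullet> (g - S) + t * (norm (g - S))\<^sup>2 / 2 - (f i X - F)"
      using t by (simp add: zero_le_mult_iff)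
    thus ?thesis by (simp add: inner_diff_right power2_norm_eq_inner algebra_simps)
  qed
  from small_pos[OF _ this] show ?thesis unfolding S_def F_def g_def by simp
qed

lemma Phi_ge: "f j y \<le> Phi (f::'m::finite \<Rightarrow> 'a \<Rightarrow> real) y"
  unfolding Phi_def by (rule Max_ge) auto

lemma Phi_attain: "\<exists>j. Phi (f::'m::finite \<Rightarrow> 'a \<Rightarrow> real) y = f j y"
proof -
  have "Phi f y \<in> range (\<lambda>j. f j y)" unfolding Phi_def by (rule Max_in) auto
  thus ?thesis by auto
qed

lemma dir_lim:
  fixes F :: "real ^ 'n \<Rightarrow> real"
  assumes "(F has_derivative (\<lambda>h. G \<bullet> h)) (at X)"
  shows "((\<lambda>t. (F (X + t *\<^sub>R D) - F X) / t) \<longlongrightarrow> G \<bullet> D) (at_right 0)"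
proof -
  have l: "((\<lambda>t. X + t *\<^sub>R D) has_derivative (\<lambda>s. s *\<^sub>R D)) (at 0)"
    by (auto intro!: derivative_eq_intros)
  have "((\<lambda>t. F (X + t *\<^sub>R D)) has_derivative (\<lambda>s. G \<bullet> (s *\<^sub>R D))) (at 0)"
    using has_derivative_compose[OF l, of F "\<lambda>h. G \<bullet> h"] assms by simp
  hence "((\<lambda>t. F (X + t *\<^sub>R D)) has_derivative (*) (G \<bullet> D)) (at 0)"
    by (simp add: mult.commute[of _ "G \<bullet> D"])
  hence "((\<lambda>t. F (X + t *\<^sub>R D)) has_field_derivative (G \<bullet> D)) (at 0)"
    by (simp add: has_field_derivative_def)
  hence "((\<lambda>t. F (X + t *\<^sub>R D)) has_field_derivative (G \<bullet> D)) (at_right 0)"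
    by (rule has_field_derivative_at_within)
  thus ?thesis by (simp add: has_field_derivative_iff)
qed

lemma cont_lim:
  fixes F :: "real ^ 'n \<Rightarrow> real"
  assumes "(F has_derivative (\<lambda>h. G \<bullet> h)) (at X)"
  shows "((\<lambda>t. F (X + t *\<^sub>R D)) \<longlongrightarrow> F X) (at_right 0)"
proof -
  have "continuous (at X) F" using assms by (rule has_derivative_continuous)
  hence c: "isCont F X" .
  have "((\<lambda>t. X + t *\<^sub>R D) \<longlongrightarrow> X + 0 *\<^sub>R D) (at_right 0)"
    by (intro tendsto_intros)
  hence "((\<lambda>t. X + t *\<^sub>R D) \<longlongrightarrow> X) (at_right 0)" by simp
  from isCont_tendsto_compose[OF c this] show ?thesis .
qed

theorem theorem3:
  fixes f :: "'m::finite \<Rightarrow> real ^ 'n \<Rightarrow> real"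
    and gradf :: "'m \<Rightarrow> real ^ 'n \<Rightarrow> real ^ 'n"
    and M :: real and w :: "real \<Rightarrow> real"
    and x :: "nat \<Rightarrow> real ^ 'n" and lam :: "nat \<Rightarrow> 'm \<Rightarrow> real"
    and p d :: "nat \<Rightarrow> real ^ 'n" and alpha :: "nat \<Rightarrow> real" and k :: nat
  assumes H1: "\<And>j y. f j y \<ge> M"
    and H2_deriv: "\<And>j y. (f j has_derivative (\<lambda>h. gradf j y \<bullet> h)) (at y)"
    and H2_cont: "\<And>j. continuous_on UNIV (gradf j)"
    and w_mono: "mono_on {0..} w" and w_nonneg: "\<And>t. t \<ge> 0 \<Longrightarrow> w t \<ge> 0"
    and w_0: "w 0 = 0" and w_cont: "continuous (at_right 0) w"
    and H2_mod: "\<And>j y z. norm (gradf j y - gradf j z) \<le> w (norm (y - z))"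
    and alg: "algX f gradf x lam p d alpha"
    and dk: "d k \<noteq> 0"
  shows "((\<lambda>t. (Phi f (x k + t *\<^sub>R d k) - Phi f (x k)) / t) \<longlongrightarrow> dir_deriv (Phi f) (x k) (d k))
           (at_right 0)
         \<and> dir_deriv (Phi f) (x k) (d k) < 0"
proof -
  define X where "X = x k"
  define D where "D = d k"
  define P where "P = p k"
  define lm where "lm = lam k"
  have lm: "lm \<in> unit_simplex" and opt: "\<forall>mu\<in>unit_simplex. qp_obj f gradf X lm \<le> qp_obj f gradf X mu"
    and Pdef: "P = - (\<Sum>j\<in>UNIV. lm j *\<^sub>R gradf j X)"
    and Ddef: "D = (if P = 0 then 0 else (1 / norm P) *\<^sub>R P)"
    using alg unfolding algX_def X_def D_def P_def lm_def by blast+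
  have P0: "P \<noteq> 0" using dk Ddef D_def by auto
  hence DP: "D = (1 / norm P) *\<^sub>R P" using Ddef by simp
  define A where "A = {j. f j X = Phi f X}"
  have neg: "gradf j X \<bullet> D < 0" if jA: "j \<in> A" for j
  proof -
    have q: "(\<Sum>j\<in>UNIV. lm j *\<^sub>R gradf j X) \<bullet> gradf j X - (norm (\<Sum>j\<in>UNIV. lm j *\<^sub>R gradf j X))\<^sup>2
          + (\<Sum>j\<in>UNIV. lm j * f j X) - f j X \<ge> 0" by (rule qp_ineq[OF lm opt])
    have "(\<Sum>j\<in>UNIV. lm j * f j X) \<le> (\<Sum>j\<in>UNIV. lm j * Phi f X)"
      using lm by (intro sum_mono mult_left_mono Phi_ge) (auto simp: unit_simplex_def)
    also have "\<dots> = Phi f X" using lm by (simp add: sum_distrib_right[symmetric] unit_simplex_def)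
    finally have F: "(\<Sum>j\<in>UNIV. lm j * f j X) \<le> f j X" using jA A_def by simp
    have "- (P \<bullet> gradf j X) \<ge> (norm P)\<^sup>2" using q F unfolding Pdef by simp
    moreover have "(norm P)\<^sup>2 > 0" using P0 by simp
    ultimately have "P \<bullet> gradf j X < 0" by linarith
    moreover have "norm P > 0" using P0 by simp
    ultimately show ?thesis unfolding DP by (simp add: inner_commute divide_neg_pos)
  qed
  obtain j0 where j0: "Phi f X = f j0 X" using Phi_attain[of f X] by blast
  hence j0A: "j0 \<in> A" by (simp add: A_def)
  hence Ane: "A \<noteq> {}" by blast
  define L where "L = Max ((\<lambda>j. gradf j X \<bullet> D) ` A)"
  have Lge: "gradf j X \<bullet> D \<le> L" if "j \<in> A" for j
    unfolding L_def using that by (intro Max_ge) auto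
  have "L \<in> (\<lambda>j. gradf j X \<bullet> D) ` A" unfolding L_def using Ane by (intro Max_in) auto
  then obtain j2 where j2: "j2 \<in> A" "L = gradf j2 X \<bullet> D" by blast
  have Lneg: "L < 0" using neg j2 by simp
  have lim: "((\<lambda>t. (Phi f (X + t *\<^sub>R D) - Phi f X) / t) \<longlongrightarrow> L) (at_right 0)"
  proof (rule tendstoI)
    fix e :: real assume e: "e > 0"
    have E1: "\<forall>\<^sub>F t in at_right 0. \<forall>j\<in>A. dist ((f j (X + t *\<^sub>R D) - f j X) / t) (gradf j X \<bullet> D) < e"
      using e by (intro eventually_ball_finite ballI tendstoD[OF dir_lim[OF H2_deriv]]) auto
    have E2: "\<forall>\<^sub>F t in at_right 0. \<forall>j\<in>-A. f j (X + t *\<^sub>R D) < f j0 (X + t *\<^sub>R D)"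
    proof (intro eventually_ball_finite ballI)
      fix j assume "j \<in> -A"
      hence "f j X < f j0 X" using Phi_ge[of f j X] j0 by (auto simp: A_def)
      moreover have "((\<lambda>t. f j0 (X + t *\<^sub>R D) - f j (X + t *\<^sub>R D)) \<longlongrightarrow> f j0 X - f j X) (at_right 0)"
        by (intro tendsto_diff cont_lim[OF H2_deriv])
      ultimately have "\<forall>\<^sub>F t in at_right 0. f j0 (X + t *\<^sub>R D) - f j (X + t *\<^sub>R D) > 0"
        by (intro order_tendstoD(1)) auto
      thus "\<forall>\<^sub>F t in at_right 0. f j (X + t *\<^sub>R D) < f j0 (X + t *\<^sub>R D)" by simp
    qed simp
    show "\<forall>\<^sub>F t in at_right 0. dist ((Phi f (X + t *\<^sub>R D) - Phi f X) / t) L < e"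
      using E1 E2 eventually_at_right_less[of "0::real"]
    proof eventually_elim
      case (elim t)
      obtain j1 where j1: "Phi f (X + t *\<^sub>R D) = f j1 (X + t *\<^sub>R D)" using Phi_attain[of f "X + t *\<^sub>R D"] by blast
      have j1A: "j1 \<in> A"
      proof (rule ccontr)
        assume "j1 \<notin> A"
        hence "f j1 (X + t *\<^sub>R D) < f j0 (X + t *\<^sub>R D)" using elim by auto
        thus False using j1 Phi_ge[of f j0 "X + t *\<^sub>R D"] by simp
      qed
      have "(Phi f (X + t *\<^sub>R D) - Phi f X) / t = (f j1 (X + t *\<^sub>R D) - f j1 X) / t"
        using j1 j1A by (simp add: A_def)
      also have "\<dots> < gradf j1 X \<bullet> D + e" using elim j1A by (auto simp: dist_real_def)
      finally have up: "(Phi f (X + t *\<^sub>R D) - Phi f X) / t < L + e" using Lge[OF j1A] by simp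
      have "(f j2 (X + t *\<^sub>R D) - f j2 X) / t \<le> (Phi f (X + t *\<^sub>R D) - Phi f X) / t"
        using elim j2 Phi_ge[of f j2 "X + t *\<^sub>R D"] by (intro divide_right_mono) (auto simp: A_def)
      moreover have "(f j2 (X + t *\<^sub>R D) - f j2 X) / t > L - e"
        using elim j2 by (auto simp: dist_real_def)
      ultimately show ?case using up by (simp add: dist_real_def abs_less_iff)
    qed
  qed
  have dd: "dir_deriv (Phi f) X D = L"
    unfolding dir_deriv_def by (rule tendsto_Lim) (simp_all add: lim)
  show ?thesis using lim Lneg dd unfolding X_def D_def by simp
qed
end
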